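(* Let $G_0^*$ and $G_1^*$ be $k$-uniform hypergraphs on $n$ and $m$ vertices respectively, and let $\mathcal{A}$ be their corona matrix. Then for every real $\lambda$ that is not an eigenvalue of $A(G_1^* )$, $$P_{\mathcal{A}}(\lambda)=\big(P_{A(G_1^* )}(\lambda)\big)^n\,P_{A(G_0^* )}\Big(\lambda+\binom{m-1}{k-2}^2\chi_{A(G_1^* )}(\lambda)\Big).$$
   Context: All hypergraphs are finite and simple: a hypergraph $G^*=(V,E)$ consists of a finite vertex set $V$ and a set $E$ of subsets of $V$ (hyperedges), each of size at least $2$. It is $k$-uniform if every hyperedge has exactly $k$ elements. For a hypergraph with vertices $v_1,\dots,v_n$, the adjacency matrix $A(G^* )$ is the $n\times n$ matrix whose $(i,j)$ entry, for $i\ne j$, is the number of hyperedges containing both $v_i$ and $v_j$, and whose diagonal entries are $0$. $J_{a,b}$ is the all-ones $a\times b$ matrix, $I_n$ the identity, $\otimes$ the Kronecker product. For a square matrix $M$, $P_M(\lambda)=\det(M-\lambda I)$. Binomial coefficients $\binom{x}{y}$ with integers $x\ge 0$ and $y$ are $0$ when $y<0$ or $y>x$. Coronal: for an $n\times n$ matrix $M$ and real $\lambda$ with $M-\lambda I_n$ invertible, $\chi_M(\lambda)=J_{1,n}(M-\lambda I_n)^{-1}J_{n,1}$, the sum of all entries of $(M-\lambda I_n)^{-1}$. Corona matrix: for $k$-uniform hypergraphs $G_0^*$ on $n$ vertices and $G_1^*$ on $m$ vertices, with $b=\binom{m-1}{k-2}$, the corona matrix is $$\mathcal{A}=\begin{bmatrix}A(G_0^*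 ) & b\,(J_{1,m}\otimes I_n)\\ b\,(J_{m,1}\otimes I_n) & A(G_1^* )\otimes I_n\end{bmatrix}.$$ *)

theory Defs
  imports "Jordan_Normal_Form.Gauss_Jordan_Elimination" "Jordan_Normal_Form.Char_Poly"
begin

definition hypergraph :: "nat \<Rightarrow> nat set set \<Rightarrow> bool" where
  "hypergraph n E \<longleftrightarrow> (\<forall>e\<in>E. e \<subseteq> {0..<n} \<and> card e \<ge> 2)"

definition k_uniform :: "nat \<Rightarrow> nat set set \<Rightarrow> bool" where
  "k_uniform k E \<longleftrightarrow> (\<forall>e\<in>E. card e = k)"

definition hyp_adj :: "nat \<Rightarrow> nat set set \<Rightarrow> real mat" where
  "hyp_adj n E = mat n n (\<lambda>(i,j). if i = j then 0 else real (card {e\<in>E. i \<in> e \<and> j \<in> e}))"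

definition kron :: "'a::times mat \<Rightarrow> 'a mat \<Rightarrow> 'a mat" where
  "kron A B = mat (dim_row A * dim_row B) (dim_col A * dim_col B)
     (\<lambda>(i,j). A $$ (i div dim_row B, j div dim_col B) * B $$ (i mod dim_row B, j mod dim_col B))"

definition ones_mat :: "nat \<Rightarrow> nat \<Rightarrow> real mat" where
  "ones_mat a b = mat a b (\<lambda>_. 1)"

definition charP :: "real mat \<Rightarrow> real \<Rightarrow> real" where
  "charP M x = det (M - x \<cdot>\<^sub>m 1\<^sub>m (dim_row M))"

definition coronal :: "real mat \<Rightarrow> real \<Rightarrow> real" where
  "coronal M x = (let B = the (mat_inverse (M - x \<cdot>\<^sub>m 1\<^sub>m (dim_row M)))
                  in \<Sum>i<dim_row M. \<Sum>j<dim_row M. B $$ (i,j))"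

definition corona_b :: "nat \<Rightarrow> nat \<Rightarrow> real" where
  "corona_b m k = (if k < 2 then 0 else real ((m - 1) choose (k - 2)))"

definition corona_mat :: "nat \<Rightarrow> nat set set \<Rightarrow> nat \<Rightarrow> nat set set \<Rightarrow> nat \<Rightarrow> real mat" where
  "corona_mat n E0 m E1 k = (let b = corona_b m k in
     four_block_mat (hyp_adj n E0) (b \<cdot>\<^sub>m kron (ones_mat 1 m) (1\<^sub>m n))
                    (b \<cdot>\<^sub>m kron (ones_mat m 1) (1\<^sub>m n)) (kron (hyp_adj m E1) (1\<^sub>m n)))"

end

theory Submission
  imports Defs
begin

lemma sum_split_mult: fixes c n :: nat shows "(\<Sum>k<c*n. f k) = (\<Sum>u<c. \<Sum>v<n. (f (u*n+v) :: 'a::comm_monoid_add))"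
proof -
  have "(\<Sum>k<c*n. f k) = (\<Sum>u<c. sum f {u*n..<u*n+n})" by (simp add: sum.nat_group)
  also have "\<dots> = (\<Sum>u<c. \<Sum>v<n. f (u*n+v))"
  proof (rule sum.cong[OF refl])
    fix u
    show "sum f {u*n..<u*n+n} = (\<Sum>v<n. f (u*n+v))"
      using sum.shift_bounds_nat_ivl[of f 0 "u*n" n] by (simp add: atLeast0LessThan add.commute)
  qed
  finally show ?thesis .
qed

lemma kron_I_index: fixes P :: "real mat"
  assumes "i < dim_row P * n" "j < dim_col P * n"
  shows "kron P (1\<^sub>m n) $$ (i,j) = P $$ (i div n, j div n) * (if i mod n = j mod n then 1 else 0)"
proof -
  have "n > 0" using assms by (cases n) auto
  then show ?thesis using assms unfolding kron_def by auto
qed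

lemma kron_I_dim[simp]: "dim_row (kron P (1\<^sub>m n)) = dim_row P * n" "dim_col (kron P (1\<^sub>m n)) = dim_col P * n"
  by (auto simp: kron_def)

lemma kron_I_mult: fixes P Q :: "real mat"
  assumes P: "P \<in> carrier_mat a c" and Q: "Q \<in> carrier_mat c d"
  shows "kron P (1\<^sub>m n) * kron Q (1\<^sub>m n) = kron (P*Q) (1\<^sub>m n)"
proof (rule eq_matI)
  fix i j assume "i < dim_row (kron (P*Q) (1\<^sub>m n))" "j < dim_col (kron (P*Q) (1\<^sub>m n))"
  then have i: "i < a*n" and j: "j < d*n" using P Q by auto
  then have n: "n > 0" by (cases n) auto
  have id: "i div n < a" using i by (simp add: less_mult_imp_div_less)
  have jd: "j div n < d" using j by (simp add: less_mult_imp_div_less)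
  have im: "i mod n < n" "j mod n < n" using n by auto
  have "(kron P (1\<^sub>m n) * kron Q (1\<^sub>m n)) $$ (i,j)
     = (\<Sum>k\<in>{0..<c*n}. kron P (1\<^sub>m n) $$ (i,k) * kron Q (1\<^sub>m n) $$ (k,j))"
    using i j P Q by (simp add: scalar_prod_def)
  also have "\<dots> = (\<Sum>k<c*n. P $$ (i div n, k div n) * (if i mod n = k mod n then 1 else 0)
       * (Q $$ (k div n, j div n) * (if k mod n = j mod n then 1 else 0)))"
    by (rule sum.cong) (use i j P Q in \<open>auto simp: kron_I_index\<close>)
  also have "\<dots> = (\<Sum>u<c. \<Sum>v<n. P $$ (i div n, u) * (if i mod n = v then 1 else 0)
       * (Q $$ (u, j div n) * (if v = j mod n then 1 else 0)))"
    by (subst sum_split_mult) (rule sum.cong[OF refl], rule sum.cong[OF refl], simp)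
  also have "\<dots> = (\<Sum>u<c. P $$ (i div n, u) * Q $$ (u, j div n) * (if i mod n = j mod n then 1 else 0))"
  proof (rule sum.cong[OF refl])
    fix u
    have "(\<Sum>v<n. P $$ (i div n, u) * (if i mod n = v then 1 else 0)
       * (Q $$ (u, j div n) * (if v = j mod n then 1 else 0))) =
       (\<Sum>v<n. if v = i mod n then P $$ (i div n, u) * Q $$ (u, j div n) * (if i mod n = j mod n then 1 else 0) else 0)"
      by (rule sum.cong) auto
    also have "\<dots> = P $$ (i div n, u) * Q $$ (u, j div n) * (if i mod n = j mod n then 1 else 0)"
      using im by (simp add: sum.delta)
    finally show "(\<Sum>v<n. P $$ (i div n, u) * (if i mod n = v then 1 else 0)
       * (Q $$ (u, j div n) * (if v = j mod n then 1 else 0))) = P $$ (i div n, u) * Q $$ (u, j div n) * (if i mod n = j mod n then 1 else 0)" .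
  qed
  also have "\<dots> = kron (P*Q) (1\<^sub>m n) $$ (i,j)"
    using i j P Q id jd by (simp add: kron_I_index scalar_prod_def sum_distrib_right atLeast0LessThan)
  finally show "(kron P (1\<^sub>m n) * kron Q (1\<^sub>m n)) $$ (i,j) = kron (P*Q) (1\<^sub>m n) $$ (i,j)" .
qed (use P Q in auto)

lemma det_permute_both: fixes A :: "real mat"
  assumes A: "A \<in> carrier_mat N N" and p: "p permutes {0..<N}"
  shows "det (mat N N (\<lambda>(i,j). A $$ (p i, p j))) = det A"
proof -
  define B where "B = mat N N (\<lambda>(i,j). A $$ (i, p j))"
  have B: "B \<in> carrier_mat N N" unfolding B_def by auto
  have pN: "\<And>i. i < N \<Longrightarrow> p i < N" using p by (simp add: permutes_in_image)
  have 1: "mat N N (\<lambda>(i,j). A $$ (p i, p j)) = mat N N (\<lambda>(i,j). B $$ (p i, j))"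
    by (rule eq_matI) (auto simp: B_def pN)
  have 2: "transpose_mat B = mat N N (\<lambda>(i,j). transpose_mat A $$ (p i, j))"
    by (rule eq_matI) (use A in \<open>auto simp: B_def pN\<close>)
  have "det B = det (transpose_mat B)" using det_transpose[OF B] by simp
  also have "\<dots> = signof p * det A"
    unfolding 2 using det_permute_rows[OF _ p, of "transpose_mat A"] A det_transpose[OF A] by auto
  finally have dB: "det B = signof p * det A" .
  have "det (mat N N (\<lambda>(i,j). A $$ (p i, p j))) = signof p * det B"
    unfolding 1 by (rule det_permute_rows[OF B p])
  also have "\<dots> = det A" using dB by (simp add: mult.assoc[symmetric] flip: of_int_mult)
  finally show ?thesis .
qed

definition bdiag :: "real mat \<Rightarrow> nat \<Rightarrow> real mat" where
  "bdiag K n = mat (n * dim_row K) (n * dim_row K) (\<lambda>(i,j). if i div dim_row K = j div dim_row K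
     then K $$ (i mod dim_row K, j mod dim_row K) else 0)"

lemma det_bdiag: assumes K: "K \<in> carrier_mat m m"
  shows "det (bdiag K n) = det K ^ n"
proof (induction n)
  case 0
  then show ?case unfolding bdiag_def by (simp add: det_def)
next
  case (Suc n)
  have dr: "dim_row K = m" using K by auto
  have "bdiag K (Suc n) = four_block_mat K (0\<^sub>m m (n*m)) (0\<^sub>m (n*m) m) (bdiag K n)"
  proof (rule eq_matI)
    fix i j assume "i < dim_row (four_block_mat K (0\<^sub>m m (n*m)) (0\<^sub>m (n*m) m) (bdiag K n))"
      "j < dim_col (four_block_mat K (0\<^sub>m m (n*m)) (0\<^sub>m (n*m) m) (bdiag K n))"
    then have i: "i < m + n*m" and j: "j < m + n*m" using K by (auto simp: bdiag_def)
    show "bdiag K (Suc n) $$ (i,j) = four_block_mat K (0\<^sub>m m (n*m)) (0\<^sub>m (n*m) m) (bdiag K n) $$ (i,j)"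
    proof (cases "i < m")
      case True
      then show ?thesis
      proof (cases "j < m")
        case True
        then show ?thesis using \<open>i < m\<close> i j K by (simp add: bdiag_def)
      next
        case False
        then have "j div m \<noteq> 0" using \<open>i < m\<close> by (simp add: div_eq_0_iff)
        then show ?thesis using \<open>i < m\<close> False i j K by (simp add: bdiag_def)
      qed
    next
      case False
      then have m: "m > 0" using i by (cases "m = 0") auto
      have idiv: "i div m = Suc ((i - m) div m)" "i mod m = (i - m) mod m" using False m
        by (simp_all add: le_div_geq le_mod_geq)
      show ?thesis
      proof (cases "j < m")
        case True
        then show ?thesis using False i j K idiv by (simp add: bdiag_def)
      next
        case jF: False
        have jdiv: "j div m = Suc ((j - m) div m)" "j mod m = (j - m) mod m" using jF m
          by (simp_all add: le_div_geq le_mod_geq)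
        show ?thesis using False jF i j K idiv jdiv by (simp add: bdiag_def)
      qed
    qed
  qed (use K in \<open>auto simp: bdiag_def\<close>)
  also have "det \<dots> = det K * det (bdiag K n)"
    by (rule det_four_block_mat_upper_right_zero[OF K refl]) (use K in \<open>auto simp: bdiag_def\<close>)
  finally show ?case using Suc by simp
qed

lemma det_kron_I: fixes K :: "real mat" assumes K: "K \<in> carrier_mat m m"
  shows "det (kron K (1\<^sub>m n)) = det K ^ n"
proof -
  define \<sigma> where "\<sigma> = (\<lambda>i. if i < m*n then (i mod m)*n + i div m else i)"
  have bnd: "(i mod m)*n + i div m < m*n" if i: "i < m*n" for i
  proof -
    have m: "m > 0" using i by (cases "m = 0") auto
    have "i div m < n" using i by (simp add: less_mult_imp_div_less mult.commute)
    then have "(i mod m)*n + i div m < (i mod m)*n + n" by simp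
    also have "\<dots> = (i mod m + 1) * n" by simp
    also have "\<dots> \<le> m * n" using m by (intro mult_right_mono) (auto simp: Suc_le_eq)
    finally show ?thesis .
  qed
  have sd: "\<sigma> i div n = i mod m" "\<sigma> i mod n = i div m" if i: "i < m*n" for i
  proof -
    have "i div m < n" using i by (simp add: less_mult_imp_div_less mult.commute)
    then show "\<sigma> i div n = i mod m" "\<sigma> i mod n = i div m" using i by (auto simp: \<sigma>_def)
  qed
  have perm: "\<sigma> permutes {0..<m*n}"
  proof (rule inj_on_nat_permutes)
    show "inj_on \<sigma> {0..<m*n}"
    proof (rule inj_onI)
      fix i j assume i: "i \<in> {0..<m*n}" and j: "j \<in> {0..<m*n}" and e: "\<sigma> i = \<sigma> j"
      have "i mod m = j mod m" "i div m = j div m" using sd[of i] sd[of j] i j e by auto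
      then show "i = j" by (metis div_mult_mod_eq)
    qed
    show "\<sigma> \<in> {0..<m*n} \<rightarrow> {0..<m*n}" using bnd by (auto simp: \<sigma>_def)
  qed (auto simp: \<sigma>_def)
  have kc: "kron K (1\<^sub>m n) \<in> carrier_mat (m*n) (m*n)" using K by auto
  have "mat (m*n) (m*n) (\<lambda>(i,j). kron K (1\<^sub>m n) $$ (\<sigma> i, \<sigma> j)) = bdiag K n"
  proof (rule eq_matI)
    fix i j assume "i < dim_row (bdiag K n)" "j < dim_col (bdiag K n)"
    then have i: "i < m*n" and j: "j < m*n" using K by (auto simp: bdiag_def mult.commute)
    have "\<sigma> i < m*n" "\<sigma> j < m*n" using bnd i j by (auto simp: \<sigma>_def)
    then show "mat (m*n) (m*n) (\<lambda>(i,j). kron K (1\<^sub>m n) $$ (\<sigma> i, \<sigma> j)) $$ (i,j) = bdiag K n $$ (i,j)"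
      using i j K sd[OF i] sd[OF j] by (auto simp: kron_I_index bdiag_def mult.commute)
  qed (use K in \<open>auto simp: bdiag_def mult.commute\<close>)
  then have "det (kron K (1\<^sub>m n)) = det (bdiag K n)"
    using det_permute_both[OF kc perm] by simp
  then show ?thesis using det_bdiag[OF K] by simp
qed

lemma schur_det: fixes A :: "real mat"
  assumes A: "A \<in> carrier_mat n n" and B: "B \<in> carrier_mat n k" and C: "C \<in> carrier_mat k n"
    and D: "D \<in> carrier_mat k k" and Di: "Di \<in> carrier_mat k k" and DDi: "D * Di = 1\<^sub>m k"
  shows "det (four_block_mat A B C D) = det (A - B * Di * C) * det D"
proof -
  have S: "A - B * Di * C \<in> carrier_mat n n" using A B C Di by auto
  have DiC: "Di * C \<in> carrier_mat k n" using Di C by auto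
  have e1: "(A - B * Di * C) * 1\<^sub>m n + B * (Di * C) = A"
  proof -
    define Y where "Y = B * (Di * C)"
    have Y: "Y \<in> carrier_mat n n" using B DiC by (auto simp: Y_def)
    have "B * Di * C = Y" using B Di C by (simp add: assoc_mult_mat Y_def)
    then have "(A - B * Di * C) * 1\<^sub>m n + B * (Di * C) = (A - Y) + Y"
      using right_mult_one_mat[OF S] by (simp add: Y_def)
    also have "\<dots> = A"
    proof (rule eq_matI)
      fix i j assume "i < dim_row A" "j < dim_col A"
      then have ij: "i < n" "j < n" using A by auto
      have dY: "dim_row Y = n" "dim_col Y = n" using Y by auto
      have dA: "dim_row A = n" "dim_col A = n" using A by auto
      show "(A - Y + Y) $$ (i,j) = A $$ (i,j)" using ij dY dA by simp
    qed (use A Y in auto)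
    finally show ?thesis .
  qed
  have e2: "(A - B * Di * C) * 0\<^sub>m n k + B * 1\<^sub>m k = B" using S B
    by (simp add: right_mult_zero_mat[OF S] left_add_zero_mat[OF B])
  have e3: "0\<^sub>m k n * 1\<^sub>m n + D * (Di * C) = C"
  proof -
    have "D * (Di * C) = C" using D Di C DDi by (simp add: assoc_mult_mat[symmetric])
    then show ?thesis using C by (simp add: left_mult_zero_mat[OF one_carrier_mat])
  qed
  have e4: "0\<^sub>m k n * 0\<^sub>m n k + D * 1\<^sub>m k = D" using D
    by (simp add: left_mult_zero_mat[OF zero_carrier_mat])
  have "four_block_mat (A - B * Di * C) B (0\<^sub>m k n) D * four_block_mat (1\<^sub>m n) (0\<^sub>m n k) (Di * C) (1\<^sub>m k)
     = four_block_mat A B C D"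
    unfolding mult_four_block_mat[OF S B zero_carrier_mat D one_carrier_mat zero_carrier_mat DiC one_carrier_mat] e1 e2 e3 e4 ..
  then have "det (four_block_mat A B C D) = det (four_block_mat (A - B * Di * C) B (0\<^sub>m k n) D)
      * det (four_block_mat (1\<^sub>m n) (0\<^sub>m n k) (Di * C) (1\<^sub>m k))"
    by (metis det_mult four_block_carrier_mat S D one_carrier_mat DiC)
  also have "det (four_block_mat (A - B * Di * C) B (0\<^sub>m k n) D) = det (A - B * Di * C) * det D"
    by (rule det_four_block_mat_lower_left_zero[OF S B refl D])
  also have "det (four_block_mat (1\<^sub>m n) (0\<^sub>m n k) (Di * C) (1\<^sub>m k)) = 1"
    using det_four_block_mat_upper_right_zero[OF one_carrier_mat[of n] refl DiC one_carrier_mat[of k]] by simp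
  finally show ?thesis by simp
qed

lemma hyp_adj_carrier[simp]: "hyp_adj n E \<in> carrier_mat n n"
  by (simp add: hyp_adj_def)

lemma kron_one_one: "kron (1\<^sub>m m) (1\<^sub>m n) = (1\<^sub>m (m*n) :: real mat)"
proof (rule eq_matI)
  fix i j assume "i < dim_row (1\<^sub>m (m*n) :: real mat)" "j < dim_col (1\<^sub>m (m*n) :: real mat)"
  then have i: "i < m*n" and j: "j < m*n" by auto
  have "i div n < m" "j div n < m" using i j by (simp_all add: less_mult_imp_div_less)
  moreover have "(i = j) = (i div n = j div n \<and> i mod n = j mod n)"
    by (metis div_mult_mod_eq)
  ultimately show "kron (1\<^sub>m m) (1\<^sub>m n) $$ (i,j) = (1\<^sub>m (m*n) :: real mat) $$ (i,j)"
    using i j by (auto simp: kron_I_index)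
qed auto

lemma kron_scalar: fixes c :: "real mat"
  assumes c: "c \<in> carrier_mat 1 1"
  shows "kron c (1\<^sub>m n) = (c $$ (0,0)) \<cdot>\<^sub>m 1\<^sub>m n"
proof (rule eq_matI)
  fix i j assume "i < dim_row ((c $$ (0,0)) \<cdot>\<^sub>m (1\<^sub>m n :: real mat))" "j < dim_col ((c $$ (0,0)) \<cdot>\<^sub>m (1\<^sub>m n :: real mat))"
  then have i: "i < n" and j: "j < n" by auto
  then show "kron c (1\<^sub>m n) $$ (i,j) = ((c $$ (0,0)) \<cdot>\<^sub>m 1\<^sub>m n) $$ (i,j)"
    using c by (auto simp: kron_I_index)
qed (use c in auto)

theorem theorem4p4:
  fixes n m k :: nat and E0 E1 :: "nat set set" and x :: real
  assumes "hypergraph n E0" and "k_uniform k E0"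
    and "hypergraph m E1" and "k_uniform k E1"
    and "\<not> eigenvalue (hyp_adj m E1) x"
  shows "charP (corona_mat n E0 m E1 k) x =
         (charP (hyp_adj m E1) x) ^ n *
         charP (hyp_adj n E0) (x + (corona_b m k)^2 * coronal (hyp_adj m E1) x)"
proof -
  define A0 where "A0 = hyp_adj n E0"
  define A1 where "A1 = hyp_adj m E1"
  define b where "b = corona_b m k"
  define K where "K = A1 - x \<cdot>\<^sub>m 1\<^sub>m m"
  define J1 where "J1 = ones_mat 1 m"
  define Jm where "Jm = ones_mat m 1"
  define Bm where "Bm = b \<cdot>\<^sub>m kron J1 (1\<^sub>m n)"
  define Cm where "Cm = b \<cdot>\<^sub>m kron Jm (1\<^sub>m n)"
  have A0: "A0 \<in> carrier_mat n n" and A1: "A1 \<in> carrier_mat m m" by (auto simp: A0_def A1_def)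
  have K: "K \<in> carrier_mat m m" using A1 unfolding K_def carrier_mat_def by auto
  have J1: "J1 \<in> carrier_mat 1 m" and Jm: "Jm \<in> carrier_mat m 1" by (auto simp: J1_def Jm_def ones_mat_def)
  have Bm: "Bm \<in> carrier_mat n (m*n)" using J1 by (auto simp: Bm_def)
  have Cm: "Cm \<in> carrier_mat (m*n) n" using Jm by (auto simp: Cm_def)
  have KD: "kron K (1\<^sub>m n) \<in> carrier_mat (m*n) (m*n)" using K by auto
  have "char_matrix A1 x = K" unfolding char_matrix_def K_def using A1
    by (intro eq_matI) auto
  then have detK: "det K \<noteq> 0" using assms(5) eigenvalue_det[OF A1] by (simp add: A1_def)
  obtain R where R: "mat_inverse K = Some R"
    using mat_inverse(1)[OF K, where b="()"] det_non_zero_imp_unit[OF K detK, where b="()"] by (cases "mat_inverse K") auto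
  have KR: "K * R = 1\<^sub>m m" and Rc: "R \<in> carrier_mat m m" using mat_inverse(2)[OF K R] by auto
  have RD: "kron R (1\<^sub>m n) \<in> carrier_mat (m*n) (m*n)" using Rc by auto
  have KRD: "kron K (1\<^sub>m n) * kron R (1\<^sub>m n) = 1\<^sub>m (m*n)"
    using kron_I_mult[OF K Rc, of n] KR kron_one_one by simp
  have cor: "corona_mat n E0 m E1 k = four_block_mat A0 Bm Cm (kron A1 (1\<^sub>m n))"
    by (simp add: corona_mat_def A0_def A1_def b_def Bm_def Cm_def J1_def Jm_def Let_def)
  have dimc: "dim_row (corona_mat n E0 m E1 k) = n + m*n" using A0 A1 Bm Cm unfolding cor by simp
  have split: "corona_mat n E0 m E1 k - x \<cdot>\<^sub>m 1\<^sub>m (n + m*n)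
     = four_block_mat (A0 - x \<cdot>\<^sub>m 1\<^sub>m n) Bm Cm (kron K (1\<^sub>m n))"
  proof (rule eq_matI)
    fix i j assume "i < dim_row (four_block_mat (A0 - x \<cdot>\<^sub>m 1\<^sub>m n) Bm Cm (kron K (1\<^sub>m n)))"
      "j < dim_col (four_block_mat (A0 - x \<cdot>\<^sub>m 1\<^sub>m n) Bm Cm (kron K (1\<^sub>m n)))"
    then have i: "i < n + m*n" and j: "j < n + m*n" using A0 Bm K by auto
    show "(corona_mat n E0 m E1 k - x \<cdot>\<^sub>m 1\<^sub>m (n + m*n)) $$ (i,j) =
      four_block_mat (A0 - x \<cdot>\<^sub>m 1\<^sub>m n) Bm Cm (kron K (1\<^sub>m n)) $$ (i,j)"
    proof (cases "i < n \<or> j < n")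
      case True
      then show ?thesis using i j A0 A1 Bm Cm KD dimc unfolding cor by auto
    next
      case False
      define i' where "i' = i - n"
      define j' where "j' = j - n"
      have i': "i' < m*n" and j': "j' < m*n" using i j False by (auto simp: i'_def j'_def)
      have "i' div n < m" "j' div n < m" using i' j' by (simp_all add: less_mult_imp_div_less)
      moreover have "(i' = j') = (i' div n = j' div n \<and> i' mod n = j' mod n)"
        by (metis div_mult_mod_eq)
      moreover have "(i = j) = (i' = j')" using False by (auto simp: i'_def j'_def)
      ultimately show ?thesis using i j A0 A1 Bm Cm KD dimc False i' j' unfolding cor
        by (auto simp: K_def kron_I_index i'_def[symmetric] j'_def[symmetric])
    qed
  qed (use A0 A1 Bm Cm KD dimc in \<open>auto simp: cor\<close>)
  have S: "Bm * kron R (1\<^sub>m n) * Cm = (b^2 * coronal A1 x) \<cdot>\<^sub>m 1\<^sub>m n"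
  proof -
    have JR: "J1 * R \<in> carrier_mat 1 m" using J1 Rc by auto
    have c1: "kron J1 (1\<^sub>m n) \<in> carrier_mat n (m*n)" using J1 by auto
    have c2: "kron (J1 * R) (1\<^sub>m n) \<in> carrier_mat n (m*n)" using JR unfolding carrier_mat_def by simp
    have c3: "kron Jm (1\<^sub>m n) \<in> carrier_mat (m*n) n" using Jm by auto
    have "Bm * kron R (1\<^sub>m n) * Cm = b \<cdot>\<^sub>m (b \<cdot>\<^sub>m (kron J1 (1\<^sub>m n) * kron R (1\<^sub>m n) * kron Jm (1\<^sub>m n)))"
      unfolding Bm_def Cm_def
      using mult_smult_assoc_mat[OF c1 RD] mult_smult_distrib[OF mult_carrier_mat[OF c1 RD] c3]
        mult_smult_assoc_mat[OF mult_carrier_mat[OF c1 RD] smult_carrier_mat[OF c3]]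
      by simp
    also have "kron J1 (1\<^sub>m n) * kron R (1\<^sub>m n) * kron Jm (1\<^sub>m n) = kron (J1 * R * Jm) (1\<^sub>m n)"
      using kron_I_mult[OF J1 Rc, of n] kron_I_mult[OF JR Jm, of n] by simp
    also have "\<dots> = ((J1 * R * Jm) $$ (0,0)) \<cdot>\<^sub>m 1\<^sub>m n"
      by (rule kron_scalar) (use JR Jm in auto)
    also have "(J1 * R * Jm) $$ (0,0) = coronal A1 x"
    proof -
      have "(J1 * R * Jm) $$ (0,0) = (\<Sum>j<m. (\<Sum>i<m. R $$ (i,j)))"
        using J1 Jm Rc by (simp add: scalar_prod_def J1_def Jm_def ones_mat_def atLeast0LessThan)
      also have "\<dots> = (\<Sum>i<m. \<Sum>j<m. R $$ (i,j))" by (rule sum.swap)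
      finally show ?thesis using R A1 by (simp add: coronal_def K_def Let_def)
    qed
    also have "b \<cdot>\<^sub>m (b \<cdot>\<^sub>m (coronal A1 x \<cdot>\<^sub>m 1\<^sub>m n)) = (b^2 * coronal A1 x) \<cdot>\<^sub>m (1\<^sub>m n :: real mat)"
      by (intro eq_matI) (auto simp: power2_eq_square)
    finally show ?thesis .
  qed
  have "charP (corona_mat n E0 m E1 k) x = det (four_block_mat (A0 - x \<cdot>\<^sub>m 1\<^sub>m n) Bm Cm (kron K (1\<^sub>m n)))"
    unfolding charP_def dimc split ..
  also have "\<dots> = det (A0 - x \<cdot>\<^sub>m 1\<^sub>m n - Bm * kron R (1\<^sub>m n) * Cm) * det (kron K (1\<^sub>m n))"
    by (rule schur_det[OF _ Bm Cm KD RD KRD]) (use A0 in auto)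
  also have "A0 - x \<cdot>\<^sub>m 1\<^sub>m n - Bm * kron R (1\<^sub>m n) * Cm = A0 - (x + b^2 * coronal A1 x) \<cdot>\<^sub>m 1\<^sub>m n"
    unfolding S using A0 by (intro eq_matI) (auto simp: algebra_simps)
  also have "det (kron K (1\<^sub>m n)) = det K ^ n" by (rule det_kron_I[OF K])
  finally show ?thesis using A0 A1
    by (simp add: charP_def A0_def A1_def b_def K_def hyp_adj_def mult.commute)
qed

end
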